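(* Let $(W,S)$ be a finite Coxeter system, let $\varphi:W\hookrightarrow\mathrm{Sym}(n)$ ($n\ge2$) be an E-embedding, and let $\alpha\in[\pi/4,\pi/2)$. Then for every $w\in W$ and every reduced expression $w=s_{i_1}s_{i_2}\cdots s_{i_\ell}$ ($s_{i_j}\in S$), $$\mathrm{B}^\alpha_\varphi(\mathrm{id})\prec\mathrm{B}^\alpha_\varphi(s_{i_1})\prec\mathrm{B}^\alpha_\varphi(s_{i_1}s_{i_2})\prec\cdots\prec\mathrm{B}^\alpha_\varphi(s_{i_1}\cdots s_{i_\ell}).$$
   Context: $(W,S)$ is a finite Coxeter system with length function $\ell$ and reflections $T=\{wsw^{-1}: w\in W,s\in S\}$. The right weak order $<_R$ is the transitive closure of $u<_R us$ for $s\in S$ with $\ell(us)=\ell(u)+1$. The Bruhat order $<_B$ is the transitive closure of $u<_B ut$ for $t\in T$ with $\ell(ut)=\ell(u)+1$. $\mathrm{Sym}(n)$, the permutations of $\{1,\dots,n\}$ written on the right ($(i)w$ is the image of $i$; $uv$ = first $u$ then $v$), is regarded as a Coxeter group with generators $(i,i+1)$ and reflections all transpositions. An E-embedding is an injective group homomorphism $\varphi:W\to\mathrm{Sym}(n)$ such that for all $u,v\in W$, $u<_R v$ implies $\varphi(u)<_B\varphi(v)$. Borders: for $\alpha\in(0,\pi/2)$ and $k=1,\dots,n$ let $\theta_k=\frac{(k-1)(\pi-2\alpha)}{n-1}+\alpha$ and $\beta^k_n=(-\cos\theta_k,\sin\theta_k)$. For $\sigma\in\mathrm{Sym}(n)$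 let $p_i(\sigma)=\sum_{j=1}^{i}\beta_n^{(j)\sigma^{-1}}$ ($i=0,\dots,n$) and let the border $\mathrm{B}^\alpha_n(\sigma)=\bigcup_{i=1}^n[p_{i-1}(\sigma),p_i(\sigma)]$ (a polygonal path). Its $y$-coordinate increases strictly from $0$ to $h^\alpha_n=\sum_k\sin\theta_k$; for $y\in[0,h^\alpha_n]$ let $\mathrm{H}(\mathrm{B}^\alpha_n(\sigma),y)$ be the $x$-coordinate of its unique point at height $y$. Write $\mathrm{B}^\alpha_n(\sigma)\prec\mathrm{B}^\alpha_n(\tau)$ if $\mathrm{H}(\mathrm{B}^\alpha_n(\sigma),y)\le\mathrm{H}(\mathrm{B}^\alpha_n(\tau),y)$ for all $y\in[0,h^\alpha_n]$. For an E-embedding $\varphi$ and $w\in W$ put $\mathrm{B}^\alpha_\varphi(w)=\mathrm{B}^\alpha_n(\varphi(w))$. *)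

theory Defs
  imports "HOL-Analysis.Analysis" "HOL-Algebra.Multiplicative_Group"
    "HOL-Combinatorics.Transposition"
begin

definition wprod :: "('a, 'b) monoid_scheme \<Rightarrow> 'a list \<Rightarrow> 'a" where
  "wprod G ws = foldr (\<lambda>s acc. s \<otimes>\<^bsub>G\<^esub> acc) ws \<one>\<^bsub>G\<^esub>"

definition cox_len :: "('a, 'b) monoid_scheme \<Rightarrow> 'a set \<Rightarrow> 'a \<Rightarrow> nat" where
  "cox_len G S w = (LEAST k. \<exists>ws. set ws \<subseteq> S \<and> length ws = k \<and> wprod G ws = w)"

definition reflections :: "('a, 'b) monoid_scheme \<Rightarrow> 'a set \<Rightarrow> 'a set" where
  "reflections G S = {w \<otimes>\<^bsub>G\<^esub> s \<otimes>\<^bsub>G\<^esub> inv\<^bsub>G\<^esub> w | w s. w \<in> carrier G \<and> s \<in> S}"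

definition weak_lt :: "('a, 'b) monoid_scheme \<Rightarrow> 'a set \<Rightarrow> 'a \<Rightarrow> 'a \<Rightarrow> bool" where
  "weak_lt G S u v \<longleftrightarrow> (u, v) \<in> trancl
     {(x, x \<otimes>\<^bsub>G\<^esub> s) | x s. x \<in> carrier G \<and> s \<in> S \<and>
        cox_len G S (x \<otimes>\<^bsub>G\<^esub> s) = cox_len G S x + 1}"

definition bruhat_lt :: "('a, 'b) monoid_scheme \<Rightarrow> 'a set \<Rightarrow> 'a \<Rightarrow> 'a \<Rightarrow> bool" where
  "bruhat_lt G S u v \<longleftrightarrow> (u, v) \<in> trancl
     {(x, x \<otimes>\<^bsub>G\<^esub> t) | x t. x \<in> carrier G \<and> t \<in> reflections G S \<and>
        cox_len G S (x \<otimes>\<^bsub>G\<^esub> t) = cox_len G S x + 1}"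

definition cox_relators :: "('a, 'b) monoid_scheme \<Rightarrow> 'a set \<Rightarrow> 'a list set" where
  "cox_relators G S = {[s, s] | s. s \<in> S} \<union>
     {concat (replicate (group.ord G (s \<otimes>\<^bsub>G\<^esub> t)) [s, t]) | s t.
        s \<in> S \<and> t \<in> S \<and> group.ord G (s \<otimes>\<^bsub>G\<^esub> t) \<noteq> 0}"

definition cox_step :: "('a, 'b) monoid_scheme \<Rightarrow> 'a set \<Rightarrow> ('a list \<times> 'a list) set" where
  "cox_step G S = {(u @ r @ v, u @ v) | u r v. r \<in> cox_relators G S}"

text \<open>(W,S) is a Coxeter system: W is generated by the involutions S and
  W = < S | s^2, (st)^m(s,t) > (every word over S representing the identity is
  equivalent to the empty word modulo the relators).\<close>
definition coxeter_system :: "('a, 'b) monoid_scheme \<Rightarrow> 'a set \<Rightarrow> bool" where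
  "coxeter_system W S \<longleftrightarrow> group W \<and> S \<subseteq> carrier W \<and>
     carrier W = {wprod W ws | ws. set ws \<subseteq> S} \<and>
     (\<forall>s\<in>S. s \<noteq> \<one>\<^bsub>W\<^esub> \<and> s \<otimes>\<^bsub>W\<^esub> s = \<one>\<^bsub>W\<^esub>) \<and>
     (\<forall>ws. set ws \<subseteq> S \<and> wprod W ws = \<one>\<^bsub>W\<^esub> \<longrightarrow>
        (ws, []) \<in> (cox_step W S \<union> (cox_step W S)\<inverse>)\<^sup>*)"

section \<open>Sym(n), acting on the right: (i)(uv) = ((i)u)v\<close>

definition sym_right :: "nat \<Rightarrow> (nat \<Rightarrow> nat) monoid" where
  "sym_right n = \<lparr>carrier = {p. p permutes {1..n}}, mult = (\<lambda>u v. v \<circ> u), one = id\<rparr>"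

definition adj_transp :: "nat \<Rightarrow> (nat \<Rightarrow> nat) set" where
  "adj_transp n = {Transposition.transpose i (i + 1) | i. 1 \<le> i \<and> i < n}"

definition E_embedding ::
  "('a, 'b) monoid_scheme \<Rightarrow> 'a set \<Rightarrow> nat \<Rightarrow> ('a \<Rightarrow> nat \<Rightarrow> nat) \<Rightarrow> bool" where
  "E_embedding W S n \<phi> \<longleftrightarrow> \<phi> \<in> hom W (sym_right n) \<and> inj_on \<phi> (carrier W) \<and>
     (\<forall>u\<in>carrier W. \<forall>v\<in>carrier W. weak_lt W S u v \<longrightarrow>
        bruhat_lt (sym_right n) (adj_transp n) (\<phi> u) (\<phi> v))"

definition theta :: "real \<Rightarrow> nat \<Rightarrow> nat \<Rightarrow> real" where
  "theta \<alpha> n k = (real k - 1) * (pi - 2 * \<alpha>) / (real n - 1) + \<alpha>"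

definition beta :: "real \<Rightarrow> nat \<Rightarrow> nat \<Rightarrow> real \<times> real" where
  "beta \<alpha> n k = (- cos (theta \<alpha> n k), sin (theta \<alpha> n k))"

definition bpt :: "real \<Rightarrow> nat \<Rightarrow> (nat \<Rightarrow> nat) \<Rightarrow> nat \<Rightarrow> real \<times> real" where
  "bpt \<alpha> n \<sigma> i = (\<Sum>j = 1..i. beta \<alpha> n (Hilbert_Choice.inv \<sigma> j))"

definition border :: "real \<Rightarrow> nat \<Rightarrow> (nat \<Rightarrow> nat) \<Rightarrow> (real \<times> real) set" where
  "border \<alpha> n \<sigma> = (\<Union>i\<in>{1..n}. closed_segment (bpt \<alpha> n \<sigma> (i - 1)) (bpt \<alpha> n \<sigma> i))"

definition bheight :: "real \<Rightarrow> nat \<Rightarrow> real" where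
  "bheight \<alpha> n = (\<Sum>k = 1..n. sin (theta \<alpha> n k))"

definition Hx :: "(real \<times> real) set \<Rightarrow> real \<Rightarrow> real" where
  "Hx B y = (THE x. (x, y) \<in> B)"

definition border_prec :: "real \<Rightarrow> nat \<Rightarrow> (nat \<Rightarrow> nat) \<Rightarrow> (nat \<Rightarrow> nat) \<Rightarrow> bool" where
  "border_prec \<alpha> n \<sigma> \<tau> \<longleftrightarrow>
     (\<forall>y\<in>{0..bheight \<alpha> n}. Hx (border \<alpha> n \<sigma>) y \<le> Hx (border \<alpha> n \<tau>) y)"

end

theory Submission
  imports Defs
begin

definition cle :: "real \<times> real \<Rightarrow> real \<times> real \<Rightarrow> bool" where
  "cle X Y \<longleftrightarrow> \<bar>fst Y - fst X\<bar> \<le> snd Y - snd X"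

definition ppath :: "(nat \<Rightarrow> real \<times> real) \<Rightarrow> nat \<Rightarrow> (real \<times> real) set" where
  "ppath P m = (\<Union>i\<in>{1..m}. closed_segment (P (i - 1)) (P i))"

lemma cle_trans: "cle X Y \<Longrightarrow> cle Y Z \<Longrightarrow> cle X Z"
  unfolding cle_def by linarith

lemma cle_refl: "cle X X" unfolding cle_def by simp

lemma cle_abs: "cle X Y \<Longrightarrow> \<bar>fst Y - fst X\<bar> \<le> \<bar>snd Y - snd X\<bar>"
  unfolding cle_def by linarith

lemma cle_abs': "cle X Y \<Longrightarrow> \<bar>fst X - fst Y\<bar> \<le> \<bar>snd X - snd Y\<bar>"
  unfolding cle_def by linarith

lemma P_mono:
  fixes P :: "nat \<Rightarrow> real \<times> real" and i j m :: nat
  assumes "\<forall>i\<in>{1..m}. cle (P (i - 1)) (P i)" and "i \<le> j" "j \<le> m"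
  shows "cle (P i) (P j)"
  using assms(2,3)
proof (induction j rule: dec_induct)
  case base then show ?case by (simp add: cle_refl)
next
  case (step j)
  then have "cle (P j) (P (Suc j))" using assms(1) by (metis Suc_le_eq atLeastAtMost_iff diff_Suc_1 le_add1 le_trans less_eq_nat.simps(2) plus_1_eq_Suc step.prems)
  then show ?case using step cle_trans by auto
qed

lemma seg_param:
  assumes "X \<in> closed_segment A B"
  obtains u where "0 \<le> u" "u \<le> 1" "X = A + u *\<^sub>R (B - A)"
  using assms unfolding closed_segment_def
  by (auto simp: algebra_simps)

lemma seg_cle:
  assumes "X \<in> closed_segment A B" "cle A B"
  shows "cle A X" "cle X B"
proof -
  obtain u where u: "0 \<le> u" "u \<le> 1" "X = A + u *\<^sub>R (B - A)" using seg_param assms(1) by blast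
  have h: "\<bar>fst B - fst A\<bar> \<le> snd B - snd A" using assms(2) unfolding cle_def .
  have fx: "fst X = fst A + u * (fst B - fst A)" "snd X = snd A + u * (snd B - snd A)"
    using u(3) by simp_all
  have "\<bar>u * (fst B - fst A)\<bar> \<le> u * (snd B - snd A)"
    using h u by (simp add: abs_mult mult_left_mono)
  then show "cle A X" using fx unfolding cle_def by simp
  have "\<bar>(1 - u) * (fst B - fst A)\<bar> \<le> (1 - u) * (snd B - snd A)"
    using h u by (simp add: abs_mult mult_left_mono)
  moreover have "fst B - fst X = (1 - u) * (fst B - fst A)" "snd B - snd X = (1 - u) * (snd B - snd A)"
    using fx by (simp_all add: algebra_simps)
  ultimately show "cle X B" unfolding cle_def by simp
qed

lemma seg_same:
  assumes "X \<in> closed_segment A B" "Y \<in> closed_segment A B" "cle A B"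
  shows "\<bar>fst Y - fst X\<bar> \<le> \<bar>snd Y - snd X\<bar>"
proof -
  obtain u where u: "0 \<le> u" "u \<le> 1" "X = A + u *\<^sub>R (B - A)" using seg_param assms(1) by blast
  obtain v where v: "0 \<le> v" "v \<le> 1" "Y = A + v *\<^sub>R (B - A)" using seg_param assms(2) by blast
  have h: "\<bar>fst B - fst A\<bar> \<le> snd B - snd A" using assms(3) unfolding cle_def .
  have "\<bar>(v - u) * (fst B - fst A)\<bar> \<le> \<bar>(v - u) * (snd B - snd A)\<bar>"
    using h by (simp add: abs_mult mult_left_mono)
  moreover have fx: "fst X = fst A + u * (fst B - fst A)" "snd X = snd A + u * (snd B - snd A)"
    using u(3) by simp_all
  moreover have fy: "fst Y = fst A + v * (fst B - fst A)" "snd Y = snd A + v * (snd B - snd A)"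
    using v(3) by simp_all
  moreover have "fst Y - fst X = (v - u) * (fst B - fst A)" "snd Y - snd X = (v - u) * (snd B - snd A)"
    unfolding fx fy by (simp_all add: algebra_simps)
  ultimately show ?thesis by simp
qed

lemma ppath_cone:
  assumes "\<forall>i\<in>{1..m}. cle (P (i - 1)) (P i)"
    and "X \<in> ppath P m" "Y \<in> ppath P m"
  shows "\<bar>fst Y - fst X\<bar> \<le> \<bar>snd Y - snd X\<bar>"
proof -
  obtain i where i: "i \<in> {1..m}" "X \<in> closed_segment (P (i - 1)) (P i)"
    using assms(2) unfolding ppath_def by blast
  obtain j where j: "j \<in> {1..m}" "Y \<in> closed_segment (P (j - 1)) (P j)"
    using assms(3) unfolding ppath_def by blast
  consider "i < j" | "j < i" | "i = j" by linarith
  then show ?thesis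
  proof cases
    case 1
    have "cle X (P i)" using seg_cle(2)[OF i(2)] assms(1) i(1) by blast
    moreover have "cle (P i) (P (j - 1))" using P_mono[OF assms(1)] 1 j(1) by auto
    moreover have "cle (P (j - 1)) Y" using seg_cle(1)[OF j(2)] assms(1) j(1) by blast
    ultimately show ?thesis using cle_trans cle_abs by blast
  next
    case 2
    have "cle Y (P j)" using seg_cle(2)[OF j(2)] assms(1) j(1) by blast
    moreover have "cle (P j) (P (i - 1))" using P_mono[OF assms(1)] 2 i(1) by auto
    moreover have "cle (P (i - 1)) X" using seg_cle(1)[OF i(2)] assms(1) i(1) by blast
    ultimately show ?thesis using cle_trans cle_abs' by blast
  next
    case 3
    then show ?thesis using seg_same i j assms(1) by blast
  qed
qed

lemma ppath_exists:
  assumes "\<forall>i\<in>{1..m}. snd (P (i - 1)) < snd (P i)" "1 \<le> m"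
    "snd (P 0) \<le> y" "y \<le> snd (P m)"
  shows "\<exists>X\<in>ppath P m. snd X = y"
  using assms
proof (induction m arbitrary: y)
  case 0 then show ?case by simp
next
  case (Suc m)
  show ?case
  proof (cases "m \<noteq> 0 \<and> y \<le> snd (P m)")
    case True
    then obtain X where "X \<in> ppath P m" "snd X = y"
      using Suc.IH[of y] Suc.prems by auto
    moreover have "ppath P m \<subseteq> ppath P (Suc m)" unfolding ppath_def by (rule UN_mono) auto
    ultimately show ?thesis by blast
  next
    case False
    then have ylo: "snd (P m) \<le> y" using Suc.prems by auto
    have pos: "snd (P m) < snd (P (Suc m))" using Suc.prems(1) by force
    define u where "u = (y - snd (P m)) / (snd (P (Suc m)) - snd (P m))"
    have u: "0 \<le> u" "u \<le> 1" using ylo pos Suc.prems(4) unfolding u_def by (auto simp: divide_simps)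
    define X where "X = (1 - u) *\<^sub>R P m + u *\<^sub>R P (Suc m)"
    have "X \<in> closed_segment (P m) (P (Suc m))"
      unfolding X_def closed_segment_def using u by blast
    then have "X \<in> ppath P (Suc m)" unfolding ppath_def by force
    moreover have "snd X = snd (P m) + u * (snd (P (Suc m)) - snd (P m))"
      unfolding X_def by (simp add: algebra_simps)
    moreover have "u * (snd (P (Suc m)) - snd (P m)) = y - snd (P m)"
      unfolding u_def using pos by simp
    ultimately have "X \<in> ppath P (Suc m)" "snd X = y" by simp_all
    then show ?thesis by blast
  qed
qed

lemma ppath_Hx:
  assumes "\<forall>i\<in>{1..m}. cle (P (i - 1)) (P i)" "X \<in> ppath P m"
  shows "Hx (ppath P m) (snd X) = fst X"
  unfolding Hx_def
proof (rule the_equality)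
  show "(fst X, snd X) \<in> ppath P m" using assms(2) by simp
next
  fix x assume "(x, snd X) \<in> ppath P m"
  from ppath_cone[OF assms(1) this assms(2)] show "x = fst X" by simp
qed

lemma ppath_shift:
  assumes "\<forall>k\<le>m. P' k = P k + e k *\<^sub>R d" "\<forall>k\<le>m. 0 \<le> e k \<and> e k \<le> 1"
    "X' \<in> ppath P' m"
  shows "\<exists>X\<in>ppath P m. \<exists>c. 0 \<le> c \<and> c \<le> 1 \<and> X' = X + c *\<^sub>R d"
proof -
  obtain i where i: "i \<in> {1..m}" "X' \<in> closed_segment (P' (i - 1)) (P' i)"
    using assms(3) unfolding ppath_def by blast
  obtain u where u: "0 \<le> u" "u \<le> 1" "X' = (1 - u) *\<^sub>R P' (i - 1) + u *\<^sub>R P' i"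
    using i(2) unfolding closed_segment_def by blast
  define X where "X = (1 - u) *\<^sub>R P (i - 1) + u *\<^sub>R P i"
  define c where "c = (1 - u) * e (i - 1) + u * e i"
  have "X \<in> closed_segment (P (i - 1)) (P i)" unfolding X_def closed_segment_def using u by blast
  then have "X \<in> ppath P m" using i(1) unfolding ppath_def by blast
  moreover have "0 \<le> c" unfolding c_def using u assms(2) i(1) by auto
  moreover have "c \<le> 1" unfolding c_def
    by (rule convex_bound_le) (use u assms(2) i(1) in auto)
  moreover have "P' (i - 1) = P (i - 1) + e (i - 1) *\<^sub>R d" "P' i = P i + e i *\<^sub>R d"
    using assms(1) i(1) by auto
  then have "X' = X + c *\<^sub>R d"
    using u(3) unfolding X_def c_def by (simp add: prod_eq_iff algebra_simps)
  ultimately show ?thesis by blast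
qed

lemma ppath_prec:
  assumes cP: "\<forall>i\<in>{1..m}. cle (P (i - 1)) (P i)" "\<forall>i\<in>{1..m}. snd (P (i - 1)) < snd (P i)"
    and cP': "\<forall>i\<in>{1..m}. cle (P' (i - 1)) (P' i)" "\<forall>i\<in>{1..m}. snd (P' (i - 1)) < snd (P' i)"
    and m: "1 \<le> m" and h0: "snd (P' 0) = snd (P 0)" and h: "snd (P' m) = snd (P m)"
    and sh: "\<forall>k\<le>m. P' k = P k + e k *\<^sub>R d" "\<forall>k\<le>m. 0 \<le> e k \<and> e k \<le> 1"
    and d: "\<bar>snd d\<bar> \<le> fst d"
    and y: "snd (P 0) \<le> y" "y \<le> snd (P m)"
  shows "Hx (ppath P m) y \<le> Hx (ppath P' m) y"
proof -
  have "\<exists>X\<in>ppath P' m. snd X = y" by (rule ppath_exists[OF cP'(2) m]) (use y h0 h in auto)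
  then obtain X' where X': "X' \<in> ppath P' m" "snd X' = y" by blast
  have "\<exists>X\<in>ppath P m. snd X = y" by (rule ppath_exists[OF cP(2) m]) (use y in auto)
  then obtain Z where Z: "Z \<in> ppath P m" "snd Z = y" by blast
  obtain X c where Xc: "X \<in> ppath P m" "0 \<le> c" "c \<le> 1" "X' = X + c *\<^sub>R d"
    using ppath_shift[OF sh X'(1)] by blast
  have "\<bar>fst Z - fst X\<bar> \<le> \<bar>snd Z - snd X\<bar>" using ppath_cone[OF cP(1) Xc(1) Z(1)] .
  also have "snd Z - snd X = c * snd d" using Z(2) X'(2) Xc(4) by simp
  also have "\<bar>c * snd d\<bar> \<le> c * fst d" using d Xc(2) by (simp add: abs_mult mult_left_mono)
  finally have "fst Z \<le> fst X'" using Xc(4) by simp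
  then show ?thesis using ppath_Hx[OF cP(1) Z(1)] ppath_Hx[OF cP'(1) X'(1)] Z(2) X'(2) by simp
qed

lemma sin_plus_cos: "sin x + cos x = sqrt 2 * sin (x + pi/4)"
  by (simp add: sin_add sin_45 cos_45 algebra_simps)

lemma cos_minus_sin: "cos x - sin x = sqrt 2 * cos (x + pi/4)"
  by (simp add: cos_add sin_45 cos_45 algebra_simps)

lemma sin_minus_cos: "sin x - cos x = sqrt 2 * sin (x - pi/4)"
  by (simp add: sin_diff sin_45 cos_45 algebra_simps)

lemma trig_cone:
  assumes "pi/4 \<le> x" "x \<le> 3*pi/4"
  shows "\<bar>cos x\<bar> \<le> sin x" "0 < sin x"
proof -
  have "0 \<le> sin (x + pi/4)" by (rule sin_ge_zero) (use assms in auto)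
  then have a: "0 \<le> sin x + cos x" unfolding sin_plus_cos by simp
  have "0 \<le> sin (x - pi/4)" by (rule sin_ge_zero) (use assms in auto)
  then have b: "0 \<le> sin x - cos x" unfolding sin_minus_cos by simp
  from a b show "\<bar>cos x\<bar> \<le> sin x" by linarith
  show "0 < sin x" using assms pi_gt_zero by (intro sin_gt_zero) linarith+
qed

lemma trig_diff:
  assumes "pi/4 \<le> A" "A \<le> B" "B \<le> 3*pi/4"
  shows "\<bar>sin B - sin A\<bar> \<le> cos A - cos B"
proof -
  have "cos (B - pi/4) \<le> cos (A - pi/4)"
    by (rule cos_monotone_0_pi_le) (use assms in auto)
  then have "sqrt 2 / 2 * (sin B + cos B) \<le> sqrt 2 / 2 * (sin A + cos A)"
    by (simp add: cos_diff sin_45 cos_45 algebra_simps)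
  then have a: "sin B + cos B \<le> sin A + cos A"
    by (rule mult_left_le_imp_le) simp
  have "cos (B + pi/4) \<le> cos (A + pi/4)"
    by (rule cos_monotone_0_pi_le) (use assms in auto)
  then have b: "cos B - sin B \<le> cos A - sin A" unfolding cos_minus_sin by simp
  from a b show ?thesis by linarith
qed

lemma theta_range:
  assumes "2 \<le> n" "k \<in> {1..n}" "pi/4 \<le> \<alpha>" "\<alpha> < pi/2"
  shows "\<alpha> \<le> theta \<alpha> n k" "theta \<alpha> n k \<le> pi - \<alpha>"
proof -
  have n: "real n - 1 > 0" using assms(1) by simp
  have f: "0 \<le> (real k - 1) / (real n - 1)" "(real k - 1) / (real n - 1) \<le> 1"
    using assms(2) n by (auto simp: divide_simps)
  have p: "0 < pi - 2 * \<alpha>" using assms by simp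
  have eq: "theta \<alpha> n k = (real k - 1) / (real n - 1) * (pi - 2 * \<alpha>) + \<alpha>"
    unfolding theta_def by simp
  have "0 \<le> (real k - 1) / (real n - 1) * (pi - 2 * \<alpha>)"
    by (rule mult_nonneg_nonneg) (use f p in auto)
  then show "\<alpha> \<le> theta \<alpha> n k" unfolding eq by linarith
  have "(real k - 1) / (real n - 1) * (pi - 2 * \<alpha>) \<le> 1 * (pi - 2 * \<alpha>)"
    by (rule mult_right_mono) (use f p in auto)
  then have "(real k - 1) / (real n - 1) * (pi - 2 * \<alpha>) \<le> pi - 2 * \<alpha>"
    by (metis mult.left_neutral)
  then show "theta \<alpha> n k \<le> pi - \<alpha>" unfolding eq by linarith
qed

lemma theta_mono:
  assumes "2 \<le> n" "k1 \<le> k2" "pi/4 \<le> \<alpha>" "\<alpha> < pi/2"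
  shows "theta \<alpha> n k1 \<le> theta \<alpha> n k2"
proof -
  have n: "real n - 1 > 0" using assms(1) by simp
  have p: "0 \<le> pi - 2 * \<alpha>" using assms by simp
  have "(real k1 - 1) * (pi - 2 * \<alpha>) \<le> (real k2 - 1) * (pi - 2 * \<alpha>)"
    by (rule mult_right_mono) (use assms p in auto)
  then show ?thesis unfolding theta_def using n by (simp add: divide_right_mono)
qed

lemma beta_cone:
  assumes "2 \<le> n" "k \<in> {1..n}" "pi/4 \<le> \<alpha>" "\<alpha> < pi/2"
  shows "\<bar>fst (beta \<alpha> n k)\<bar> \<le> snd (beta \<alpha> n k)" "0 < snd (beta \<alpha> n k)"
proof -
  have r: "pi/4 \<le> theta \<alpha> n k" "theta \<alpha> n k \<le> 3*pi/4"
    using theta_range[OF assms] assms by auto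
  show "\<bar>fst (beta \<alpha> n k)\<bar> \<le> snd (beta \<alpha> n k)" "0 < snd (beta \<alpha> n k)"
    unfolding beta_def using trig_cone[OF r] by auto
qed

lemma beta_diff:
  assumes "2 \<le> n" "k1 \<in> {1..n}" "k2 \<in> {1..n}" "k1 \<le> k2" "pi/4 \<le> \<alpha>" "\<alpha> < pi/2"
  shows "\<bar>snd (beta \<alpha> n k2 - beta \<alpha> n k1)\<bar> \<le> fst (beta \<alpha> n k2 - beta \<alpha> n k1)"
proof -
  have r1: "pi/4 \<le> theta \<alpha> n k1" using theta_range[OF assms(1,2,5,6)] assms by auto
  have r2: "theta \<alpha> n k2 \<le> 3*pi/4" using theta_range[OF assms(1,3,5,6)] assms by auto
  have m: "theta \<alpha> n k1 \<le> theta \<alpha> n k2" using theta_mono[OF assms(1,4,5,6)] .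
  show ?thesis unfolding beta_def using trig_diff[OF r1 m r2] by simp
qed

abbreviation tr :: "nat \<Rightarrow> nat \<Rightarrow> nat \<Rightarrow> nat" where "tr \<equiv> Transposition.transpose"

definition Inv :: "nat \<Rightarrow> (nat \<Rightarrow> nat) \<Rightarrow> (nat \<times> nat) set" where
  "Inv n \<sigma> = {(i, j). i \<in> {1..n} \<and> j \<in> {1..n} \<and> i < j \<and> \<sigma> j < \<sigma> i}"

definition Ninv :: "nat \<Rightarrow> (nat \<Rightarrow> nat) \<Rightarrow> nat" where
  "Ninv n \<sigma> = card (Inv n \<sigma>)"

lemma finite_Inv: "finite (Inv n \<sigma>)"
  by (rule finite_subset[of _ "{1..n} \<times> {1..n}"]) (auto simp: Inv_def)

lemma sym_carrier: "\<sigma> \<in> carrier (sym_right n) \<longleftrightarrow> \<sigma> permutes {1..n}"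
  by (simp add: sym_right_def)

lemma sym_mult: "x \<otimes>\<^bsub>sym_right n\<^esub> y = y \<circ> x"
  by (simp add: sym_right_def)

lemma sym_one: "\<one>\<^bsub>sym_right n\<^esub> = id"
  by (simp add: sym_right_def)

lemma sym_group: "group (sym_right n)"
proof (rule groupI)
  fix x assume "x \<in> carrier (sym_right n)"
  then have x: "x permutes {1..n}" by (simp add: sym_carrier)
  show "\<exists>y\<in>carrier (sym_right n). y \<otimes>\<^bsub>sym_right n\<^esub> x = \<one>\<^bsub>sym_right n\<^esub>"
    using permutes_inv[OF x] permutes_inv_o(1)[OF x]
    by (auto simp: sym_carrier sym_mult sym_one)
qed (auto simp: sym_carrier sym_mult sym_one permutes_compose permutes_id comp_assoc)

lemma sym_inv: "\<sigma> permutes {1..n} \<Longrightarrow> inv\<^bsub>sym_right n\<^esub> \<sigma> = Hilbert_Choice.inv \<sigma>"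
  by (rule group.inv_equality[OF sym_group])
     (auto simp: sym_carrier sym_mult sym_one permutes_inv permutes_inv_o)

lemma wprod_sym_Nil: "wprod (sym_right n) [] = id"
  by (simp add: wprod_def sym_right_def)

lemma wprod_sym_Cons: "wprod (sym_right n) (s # ws) = wprod (sym_right n) ws \<circ> s"
  by (simp add: wprod_def sym_right_def)

lemma refl_transp:
  assumes "t \<in> reflections (sym_right n) (adj_transp n)"
  shows "\<exists>a b. 1 \<le> a \<and> a < b \<and> b \<le> n \<and> t = tr a b"
proof -
  obtain w s where ws: "t = w \<otimes>\<^bsub>sym_right n\<^esub> s \<otimes>\<^bsub>sym_right n\<^esub> inv\<^bsub>sym_right n\<^esub> w"
    "w \<in> carrier (sym_right n)" "s \<in> adj_transp n"
    using assms unfolding reflections_def by blast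
  have w: "w permutes {1..n}" using ws(2) by (simp add: sym_carrier)
  obtain i where i: "1 \<le> i" "i < n" "s = tr i (i + 1)" using ws(3) unfolding adj_transp_def by blast
  have t: "t = Hilbert_Choice.inv w \<circ> (tr i (i + 1) \<circ> w)" using ws(1) i(3) sym_inv[OF w] by (simp add: sym_mult)
  have t2: "t = tr (Hilbert_Choice.inv w i) (Hilbert_Choice.inv w (i + 1))"
    unfolding t fun_eq_iff
    by (auto simp: Transposition.transpose_def permutes_inverses[OF w] permutes_inv_eq[OF w])
       (metis permutes_inverses(2)[OF w])+
  have wi: "Hilbert_Choice.inv w permutes {1..n}" using permutes_inv[OF w] .
  have r: "Hilbert_Choice.inv w i \<in> {1..n}" "Hilbert_Choice.inv w (i + 1) \<in> {1..n}"
    using permutes_in_image[OF wi] i by auto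
  have ne: "Hilbert_Choice.inv w i \<noteq> Hilbert_Choice.inv w (i + 1)"
  proof
    assume "Hilbert_Choice.inv w i = Hilbert_Choice.inv w (i + 1)"
    then have "w (Hilbert_Choice.inv w i) = w (Hilbert_Choice.inv w (i + 1))" by simp
    then show False using permutes_inverses(1)[OF w] by simp
  qed
  show ?thesis
  proof (cases "Hilbert_Choice.inv w i < Hilbert_Choice.inv w (i + 1)")
    case True then show ?thesis using t2 r by auto
  next
    case False then show ?thesis using t2 r ne
      by (intro exI[of _ "Hilbert_Choice.inv w (i + 1)"] exI[of _ "Hilbert_Choice.inv w i"]) (auto simp: transpose_commute)
  qed
qed

lemma tr_order:
  assumes "x < y" "(x, y) \<noteq> (i, Suc i)"
  shows "tr i (Suc i) x < tr i (Suc i) y"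
  using assms by (auto simp: Transposition.transpose_def)

lemma Inv_adj_sub:
  assumes "1 \<le> i" "i < n"
  shows "Inv n (w \<circ> tr i (Suc i)) \<subseteq>
    insert (i, Suc i) ((\<lambda>(x, y). (tr i (Suc i) x, tr i (Suc i) y)) ` Inv n w)"
proof
  fix p assume p: "p \<in> Inv n (w \<circ> tr i (Suc i))"
  obtain x y where xy: "p = (x, y)" by (cases p)
  show "p \<in> insert (i, Suc i) ((\<lambda>(x, y). (tr i (Suc i) x, tr i (Suc i) y)) ` Inv n w)"
  proof (cases "(x, y) = (i, Suc i)")
    case True then show ?thesis using xy by simp
  next
    case False
    have sp: "tr i (Suc i) permutes {1..n}" using assms by (intro permutes_swap_id) auto
    have "(tr i (Suc i) x, tr i (Suc i) y) \<in> Inv n w"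
      using p xy tr_order[OF _ False] permutes_in_image[OF sp] unfolding Inv_def by auto
    moreover have "p = (\<lambda>(x, y). (tr i (Suc i) x, tr i (Suc i) y)) (tr i (Suc i) x, tr i (Suc i) y)"
      using xy by simp
    ultimately show ?thesis by blast
  qed
qed

lemma Ninv_adj:
  assumes "1 \<le> i" "i < n"
  shows "Ninv n (w \<circ> tr i (Suc i)) \<le> Suc (Ninv n w)"
proof -
  have "Ninv n (w \<circ> tr i (Suc i)) \<le> card (insert (i, Suc i) ((\<lambda>(x, y). (tr i (Suc i) x, tr i (Suc i) y)) ` Inv n w))"
    unfolding Ninv_def by (rule card_mono[OF _ Inv_adj_sub[OF assms]]) (simp add: finite_Inv)
  also have "\<dots> \<le> Suc (card ((\<lambda>(x, y). (tr i (Suc i) x, tr i (Suc i) y)) ` Inv n w))"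
    by (rule card_insert_le_m1) (auto simp: finite_Inv)
  also have "\<dots> \<le> Suc (Ninv n w)" unfolding Ninv_def using card_image_le[OF finite_Inv] by simp
  finally show ?thesis .
qed

lemma tr_open:
  assumes "a < b"
  shows "(a < tr a b x \<and> tr a b x < b) \<longleftrightarrow> (a < x \<and> x < b)"
  using assms by (cases "x = a"; cases "x = b") auto

lemma Ninv_swap:
  assumes "1 \<le> a" "a < b" "b \<le> n" "q b < q a"
  shows "Ninv n (q \<circ> tr a b) < Ninv n q"
proof -
  define f where "f = (\<lambda>(x::nat, y::nat). if (a < x \<and> x < b) \<or> (a < y \<and> y < b) then (x, y) else (tr a b x, tr a b y))"
  have ff: "f (f p) = p" for p
  proof -
    obtain x y where p: "p = (x, y)" by (cases p)
    show ?thesis unfolding p f_def using tr_open[OF assms(2)] by auto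
  qed
  have inj: "inj_on f (Inv n (q \<circ> tr a b))"
    by (rule inj_onI) (metis ff)
  have sub: "f ` Inv n (q \<circ> tr a b) \<subseteq> Inv n q - {(a, b)}"
  proof
    fix p assume "p \<in> f ` Inv n (q \<circ> tr a b)"
    then obtain x y where xy: "(x, y) \<in> Inv n (q \<circ> tr a b)" "p = f (x, y)" by auto
    have "f (x, y) \<in> Inv n q \<and> f (x, y) \<noteq> (a, b)"
      using xy(1) assms
      by (cases "x = a"; cases "x = b"; cases "y = a"; cases "y = b") (auto simp: f_def Inv_def)
    then show "p \<in> Inv n q - {(a, b)}" using xy(2) by simp
  qed
  have ab: "(a, b) \<in> Inv n q" using assms unfolding Inv_def by auto
  have "Ninv n (q \<circ> tr a b) \<le> card (Inv n q - {(a, b)})"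
    unfolding Ninv_def by (rule card_inj_on_le[OF inj sub]) (simp add: finite_Inv)
  also have "\<dots> < Ninv n q" unfolding Ninv_def
    by (rule card_Diff1_less[OF finite_Inv ab])
  finally show ?thesis .
qed

lemma Ninv_inv_le:
  assumes "\<sigma> permutes {1..n}"
  shows "Ninv n \<sigma> \<le> Ninv n (Hilbert_Choice.inv \<sigma>)"
  unfolding Ninv_def
proof (rule card_inj_on_le[of "\<lambda>(i, j). (\<sigma> j, \<sigma> i)"])
  show "inj_on (\<lambda>(i, j). (\<sigma> j, \<sigma> i)) (Inv n \<sigma>)"
    using permutes_inj[OF assms] by (auto simp: inj_on_def inj_def)
  show "(\<lambda>(i, j). (\<sigma> j, \<sigma> i)) ` Inv n \<sigma> \<subseteq> Inv n (Hilbert_Choice.inv \<sigma>)"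
    using permutes_in_image[OF assms] permutes_inverses[OF assms] unfolding Inv_def by auto
  show "finite (Inv n (Hilbert_Choice.inv \<sigma>))" by (rule finite_Inv)
qed

lemma Ninv_inv:
  assumes "\<sigma> permutes {1..n}"
  shows "Ninv n (Hilbert_Choice.inv \<sigma>) = Ninv n \<sigma>"
  using Ninv_inv_le[OF assms] Ninv_inv_le[OF permutes_inv[OF assms]] permutes_inv_inv[OF assms]
  by simp

lemma adj_mono:
  fixes f :: "nat \<Rightarrow> nat"
  assumes "\<forall>i. 1 \<le> i \<and> i < n \<longrightarrow> f i < f (Suc i)" "1 \<le> i" "i \<le> j" "j \<le> n"
  shows "f i \<le> f j"
  using assms(3,4)
proof (induction j rule: dec_induct)
  case base then show ?case by simp
next
  case (step j)
  then show ?case using assms(1,2) by (metis Suc_le_lessD le_trans less_imp_le_nat)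
qed

lemma adj_ge:
  fixes f :: "nat \<Rightarrow> nat"
  assumes "\<forall>i. 1 \<le> i \<and> i < n \<longrightarrow> f i < f (Suc i)" "\<forall>k\<in>{1..n}. f k \<in> {1..n}"
  shows "k \<in> {1..n} \<Longrightarrow> k \<le> f k"
proof (induction k)
  case 0 then show ?case by simp
next
  case (Suc k)
  show ?case
  proof (cases "k = 0")
    case True then show ?thesis using assms(2) Suc.prems by auto
  next
    case False
    then have "k \<le> f k" using Suc by auto
    moreover have "f k < f (Suc k)" using assms(1) Suc.prems False by auto
    ultimately show ?thesis by simp
  qed
qed

lemma descent:
  assumes "\<sigma> permutes {1..n}" "\<sigma> \<noteq> id"
  shows "\<exists>i. 1 \<le> i \<and> i < n \<and> \<sigma> (Suc i) < \<sigma> i"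
proof (rule ccontr)
  assume "\<not> ?thesis"
  then have le: "\<forall>i. 1 \<le> i \<and> i < n \<longrightarrow> \<sigma> i \<le> \<sigma> (Suc i)" by auto
  have inj: "inj \<sigma>" using permutes_inj[OF assms(1)] .
  have A: "\<forall>i. 1 \<le> i \<and> i < n \<longrightarrow> \<sigma> i < \<sigma> (Suc i)"
    using le inj by (metis inj_eq le_neq_implies_less n_not_Suc_n)
  have rng: "\<forall>k\<in>{1..n}. \<sigma> k \<in> {1..n}" using permutes_in_image[OF assms(1)] by blast
  have ip: "Hilbert_Choice.inv \<sigma> permutes {1..n}" using permutes_inv[OF assms(1)] .
  have rngi: "\<forall>k\<in>{1..n}. Hilbert_Choice.inv \<sigma> k \<in> {1..n}" using permutes_in_image[OF ip] by blast
  have B: "\<forall>i. 1 \<le> i \<and> i < n \<longrightarrow> Hilbert_Choice.inv \<sigma> i < Hilbert_Choice.inv \<sigma> (Suc i)"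
  proof (intro allI impI)
    fix i assume i: "1 \<le> i \<and> i < n"
    show "Hilbert_Choice.inv \<sigma> i < Hilbert_Choice.inv \<sigma> (Suc i)"
    proof (rule ccontr)
      assume "\<not> ?thesis"
      then have "Hilbert_Choice.inv \<sigma> (Suc i) \<le> Hilbert_Choice.inv \<sigma> i" by simp
      moreover have "1 \<le> Hilbert_Choice.inv \<sigma> (Suc i)" "Hilbert_Choice.inv \<sigma> i \<le> n" using rngi i by auto
      ultimately have "\<sigma> (Hilbert_Choice.inv \<sigma> (Suc i)) \<le> \<sigma> (Hilbert_Choice.inv \<sigma> i)" using adj_mono[OF A] by blast
      then show False using permutes_inverses(1)[OF assms(1)] by simp
    qed
  qed
  have "\<sigma> = id"
  proof
    fix k
    show "\<sigma> k = id k"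
    proof (cases "k \<in> {1..n}")
      case True
      have g1: "k \<le> \<sigma> k" using adj_ge[OF A rng True] .
      have g2: "k \<le> Hilbert_Choice.inv \<sigma> k" using adj_ge[OF B rngi True] .
      have "\<sigma> k \<le> \<sigma> (Hilbert_Choice.inv \<sigma> k)" using adj_mono[OF A] g2 True rngi by auto
      then show ?thesis using g1 permutes_inverses(1)[OF assms(1)] by simp
    next
      case False then show ?thesis using permutes_not_in[OF assms(1)] by simp
    qed
  qed
  then show False using assms(2) by simp
qed

lemma Ninv_id: "Ninv n id = 0"
proof -
  have "Inv n id = {}" unfolding Inv_def by auto
  then show ?thesis unfolding Ninv_def by simp
qed

lemma Ninv_id': "Ninv n (\<lambda>a. a) = 0"
  using Ninv_id by (simp add: id_def)

lemma word_exists: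
  "\<sigma> permutes {1..n} \<Longrightarrow> Ninv n \<sigma> = N \<Longrightarrow>
    \<exists>ws. set ws \<subseteq> adj_transp n \<and> length ws = N \<and> wprod (sym_right n) ws = \<sigma>"
proof (induction N arbitrary: \<sigma>)
  case 0
  have "\<sigma> = id"
  proof (rule ccontr)
    assume "\<sigma> \<noteq> id"
    then obtain i where i: "1 \<le> i" "i < n" "\<sigma> (Suc i) < \<sigma> i" using descent 0 by blast
    then have "(i, Suc i) \<in> Inv n \<sigma>" unfolding Inv_def by auto
    then have "Ninv n \<sigma> > 0" unfolding Ninv_def using finite_Inv card_gt_0_iff by blast
    then show False using 0 by simp
  qed
  then show ?case by (intro exI[of _ "[]"]) (simp add: wprod_sym_Nil)
next
  case (Suc N)
  have "\<sigma> \<noteq> id" using Suc.prems Ninv_id Ninv_id' by auto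
  then obtain i where i: "1 \<le> i" "i < n" "\<sigma> (Suc i) < \<sigma> i" using descent Suc.prems by blast
  define sg where "sg = \<sigma> \<circ> tr i (Suc i)"
  have sp: "tr i (Suc i) permutes {1..n}" using i by (intro permutes_swap_id) auto
  have p': "sg permutes {1..n}" unfolding sg_def by (rule permutes_compose[OF sp Suc.prems(1)])
  have lt: "Ninv n sg < Ninv n \<sigma>" unfolding sg_def using Ninv_swap[of i "Suc i" n \<sigma>] i by simp
  have bk: "sg \<circ> tr i (Suc i) = \<sigma>" unfolding sg_def by (simp add: comp_assoc)
  have "Ninv n \<sigma> \<le> Suc (Ninv n sg)" using Ninv_adj[OF i(1,2), of sg] bk by simp
  then have "Ninv n sg = N" using lt Suc.prems by simp
  then obtain ws where ws: "set ws \<subseteq> adj_transp n" "length ws = N" "wprod (sym_right n) ws = sg"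
    using Suc.IH[OF p'] by blast
  have "tr i (Suc i) \<in> adj_transp n" unfolding adj_transp_def using i by auto
  then show ?case using ws bk
    by (intro exI[of _ "tr i (Suc i) # ws"]) (simp add: wprod_sym_Cons)
qed

lemma word_bound:
  "set ws \<subseteq> adj_transp n \<Longrightarrow> Ninv n (wprod (sym_right n) ws) \<le> length ws"
proof (induction ws)
  case Nil then show ?case by (simp add: wprod_sym_Nil Ninv_id Ninv_id')
next
  case (Cons s ws)
  obtain i where i: "1 \<le> i" "i < n" "s = tr i (Suc i)" using Cons.prems unfolding adj_transp_def by auto
  have "Ninv n (wprod (sym_right n) (s # ws)) \<le> Suc (Ninv n (wprod (sym_right n) ws))"
    unfolding wprod_sym_Cons i(3) by (rule Ninv_adj[OF i(1,2)])
  then show ?case using Cons by simp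
qed

lemma cox_len_sym:
  assumes "\<sigma> permutes {1..n}"
  shows "cox_len (sym_right n) (adj_transp n) \<sigma> = Ninv n \<sigma>"
proof -
  obtain ws where ws: "set ws \<subseteq> adj_transp n" "length ws = Ninv n \<sigma>" "wprod (sym_right n) ws = \<sigma>"
    using word_exists[OF assms refl] by blast
  have ex: "\<exists>ws. set ws \<subseteq> adj_transp n \<and> length ws = Ninv n \<sigma> \<and> wprod (sym_right n) ws = \<sigma>"
    using ws by blast
  have le: "cox_len (sym_right n) (adj_transp n) \<sigma> \<le> Ninv n \<sigma>"
    unfolding cox_len_def by (rule Least_le) (rule ex)
  obtain vs where vs: "set vs \<subseteq> adj_transp n" "length vs = cox_len (sym_right n) (adj_transp n) \<sigma>"
    "wprod (sym_right n) vs = \<sigma>"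
    using LeastI_ex[of "\<lambda>k. \<exists>ws. set ws \<subseteq> adj_transp n \<and> length ws = k \<and> wprod (sym_right n) ws = \<sigma>"] ex
    unfolding cox_len_def by blast
  have "Ninv n \<sigma> \<le> cox_len (sym_right n) (adj_transp n) \<sigma>" using word_bound[OF vs(1)] vs by simp
  then show ?thesis using le by simp
qed

lemma bpt_0: "bpt \<alpha> n \<sigma> 0 = 0" by (simp add: bpt_def)

lemma bpt_Suc: "bpt \<alpha> n \<sigma> (Suc k) = bpt \<alpha> n \<sigma> k + beta \<alpha> n (Hilbert_Choice.inv \<sigma> (Suc k))"
  by (simp add: bpt_def)

lemma border_ppath: "border \<alpha> n \<sigma> = ppath (bpt \<alpha> n \<sigma>) n"
  by (simp add: border_def ppath_def)

lemma bpt_cle: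
  assumes "2 \<le> n" "pi/4 \<le> \<alpha>" "\<alpha> < pi/2" "\<sigma> permutes {1..n}" "i \<in> {1..n}"
  shows "cle (bpt \<alpha> n \<sigma> (i - 1)) (bpt \<alpha> n \<sigma> i)" "snd (bpt \<alpha> n \<sigma> (i - 1)) < snd (bpt \<alpha> n \<sigma> i)"
proof -
  have i: "i = Suc (i - 1)" using assms(5) by auto
  have eq: "bpt \<alpha> n \<sigma> i = bpt \<alpha> n \<sigma> (i - 1) + beta \<alpha> n (Hilbert_Choice.inv \<sigma> i)"
    using bpt_Suc[of \<alpha> n \<sigma> "i - 1"] i by simp
  have k: "Hilbert_Choice.inv \<sigma> i \<in> {1..n}" using permutes_in_image[OF permutes_inv[OF assms(4)]] assms(5) by blast
  note bc = beta_cone[OF assms(1) k assms(2,3)]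
  show "cle (bpt \<alpha> n \<sigma> (i - 1)) (bpt \<alpha> n \<sigma> i)" unfolding cle_def eq using bc by simp
  show "snd (bpt \<alpha> n \<sigma> (i - 1)) < snd (bpt \<alpha> n \<sigma> i)" unfolding eq using bc by simp
qed

lemma bpt_height:
  assumes "\<sigma> permutes {1..n}"
  shows "snd (bpt \<alpha> n \<sigma> n) = bheight \<alpha> n"
proof -
  have "bheight \<alpha> n = sum (\<lambda>k. sin (theta \<alpha> n k)) {1..n}" by (simp add: bheight_def)
  also have "\<dots> = sum ((\<lambda>k. sin (theta \<alpha> n k)) \<circ> Hilbert_Choice.inv \<sigma>) {1..n}"
    by (rule sum.permute[OF permutes_inv[OF assms]])
  also have "\<dots> = snd (bpt \<alpha> n \<sigma> n)" by (simp add: bpt_def snd_sum beta_def)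
  finally show ?thesis by simp
qed

lemma bruhat_step:
  assumes n: "2 \<le> n" and al: "pi/4 \<le> \<alpha>" "\<alpha> < pi/2"
    and x: "x permutes {1..n}" and ab: "1 \<le> a" "a < b" "b \<le> n"
    and len: "cox_len (sym_right n) (adj_transp n) (tr a b \<circ> x) = cox_len (sym_right n) (adj_transp n) x + 1"
  shows "border_prec \<alpha> n x (tr a b \<circ> x)"
proof -
  define q where "q = Hilbert_Choice.inv x"
  have qp: "q permutes {1..n}" unfolding q_def using permutes_inv[OF x] .
  have tp: "tr a b permutes {1..n}" using ab by (intro permutes_swap_id) auto
  have taup: "tr a b \<circ> x permutes {1..n}" by (rule permutes_compose[OF x tp])
  have invtau: "Hilbert_Choice.inv (tr a b \<circ> x) = q \<circ> tr a b"
    unfolding q_def using o_inv_distrib[OF bij_transpose permutes_bij[OF x]] by simp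
  have qab: "q a < q b"
  proof (rule ccontr)
    assume "\<not> ?thesis"
    moreover have "q a \<noteq> q b" using permutes_inj[OF qp] ab by (auto dest: injD)
    ultimately have "q b < q a" by simp
    then have "Ninv n (q \<circ> tr a b) < Ninv n q" using Ninv_swap ab by blast
    then have "Ninv n (tr a b \<circ> x) < Ninv n x"
      using Ninv_inv[OF taup] Ninv_inv[OF x] invtau unfolding q_def by simp
    then show False using len cox_len_sym[OF taup] cox_len_sym[OF x] by simp
  qed
  have qa: "q a \<in> {1..n}" "q b \<in> {1..n}" using permutes_in_image[OF qp] ab by auto
  define d where "d = beta \<alpha> n (q b) - beta \<alpha> n (q a)"
  define e :: "nat \<Rightarrow> real" where "e k = (if a \<le> k \<and> k < b then 1 else 0)" for k
  have shift: "bpt \<alpha> n (tr a b \<circ> x) k = bpt \<alpha> n x k + e k *\<^sub>R d" for k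
  proof (induction k)
    case 0 then show ?case using ab by (simp add: bpt_0 e_def)
  next
    case (Suc k)
    have "bpt \<alpha> n (tr a b \<circ> x) (Suc k) = bpt \<alpha> n (tr a b \<circ> x) k + beta \<alpha> n (q (tr a b (Suc k)))"
      using bpt_Suc[of \<alpha> n "tr a b \<circ> x" k] invtau by simp
    also have "\<dots> = bpt \<alpha> n x k + e k *\<^sub>R d + beta \<alpha> n (q (tr a b (Suc k)))" by (simp only: Suc.IH)
    also have "\<dots> = bpt \<alpha> n x (Suc k) + e (Suc k) *\<^sub>R d"
    proof -
      have bx: "bpt \<alpha> n x (Suc k) = bpt \<alpha> n x k + beta \<alpha> n (q (Suc k))"
        using bpt_Suc[of \<alpha> n x k] unfolding q_def by simp
      consider "Suc k = a" | "Suc k = b" | "Suc k \<noteq> a" "Suc k \<noteq> b" by blast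
      then show ?thesis
      proof cases
        case 1 then show ?thesis using bx ab unfolding e_def d_def by (simp add: algebra_simps)
      next
        case 2 then show ?thesis using bx ab unfolding e_def d_def by (simp add: algebra_simps)
      next
        case 3
        then have "e (Suc k) = e k" unfolding e_def by auto
        then show ?thesis using bx 3 by simp
      qed
    qed
    finally show ?case .
  qed
  have dd: "\<bar>snd d\<bar> \<le> fst d" unfolding d_def by (rule beta_diff[OF n qa(1) qa(2) _ al]) (use qab in simp)
  show ?thesis
    unfolding border_prec_def border_ppath
  proof
    fix y assume y: "y \<in> {0..bheight \<alpha> n}"
    show "Hx (ppath (bpt \<alpha> n x) n) y \<le> Hx (ppath (bpt \<alpha> n (tr a b \<circ> x)) n) y"
    proof (rule ppath_prec[where e = e and d = d])
      show "\<forall>i\<in>{1..n}. cle (bpt \<alpha> n x (i - 1)) (bpt \<alpha> n x i)" using bpt_cle[OF n al x] by blast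
      show "\<forall>i\<in>{1..n}. snd (bpt \<alpha> n x (i - 1)) < snd (bpt \<alpha> n x i)" using bpt_cle[OF n al x] by blast
      show "\<forall>i\<in>{1..n}. cle (bpt \<alpha> n (tr a b \<circ> x) (i - 1)) (bpt \<alpha> n (tr a b \<circ> x) i)" using bpt_cle[OF n al taup] by blast
      show "\<forall>i\<in>{1..n}. snd (bpt \<alpha> n (tr a b \<circ> x) (i - 1)) < snd (bpt \<alpha> n (tr a b \<circ> x) i)" using bpt_cle[OF n al taup] by blast
      show "1 \<le> n" using n by simp
      show "snd (bpt \<alpha> n (tr a b \<circ> x) 0) = snd (bpt \<alpha> n x 0)" by (simp add: bpt_0)
      show "snd (bpt \<alpha> n (tr a b \<circ> x) n) = snd (bpt \<alpha> n x n)" using bpt_height[OF x] bpt_height[OF taup] by simp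
      show "\<forall>k\<le>n. bpt \<alpha> n (tr a b \<circ> x) k = bpt \<alpha> n x k + e k *\<^sub>R d" using shift by blast
      show "\<forall>k\<le>n. 0 \<le> e k \<and> e k \<le> 1" unfolding e_def by simp
      show "\<bar>snd d\<bar> \<le> fst d" by (rule dd)
      show "snd (bpt \<alpha> n x 0) \<le> y" using y by (simp add: bpt_0)
      show "y \<le> snd (bpt \<alpha> n x n)" using y bpt_height[OF x] by simp
    qed
  qed
qed

lemma border_prec_trans: "border_prec \<alpha> n a b \<Longrightarrow> border_prec \<alpha> n b c \<Longrightarrow> border_prec \<alpha> n a c"
  unfolding border_prec_def by (meson order_trans)

lemma bruhat_prec:
  assumes n: "2 \<le> n" and al: "pi/4 \<le> \<alpha>" "\<alpha> < pi/2"
    and "bruhat_lt (sym_right n) (adj_transp n) \<sigma> \<tau>"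
  shows "border_prec \<alpha> n \<sigma> \<tau>"
proof -
  have one: "border_prec \<alpha> n u v" if "(u, v) \<in> {(x, x \<otimes>\<^bsub>sym_right n\<^esub> t) | x t. x \<in> carrier (sym_right n) \<and>
        t \<in> reflections (sym_right n) (adj_transp n) \<and>
        cox_len (sym_right n) (adj_transp n) (x \<otimes>\<^bsub>sym_right n\<^esub> t) = cox_len (sym_right n) (adj_transp n) x + 1}" for u v
  proof -
    from that obtain x t where xt0: "u = x" "v = x \<otimes>\<^bsub>sym_right n\<^esub> t" "x \<in> carrier (sym_right n)"
      "t \<in> reflections (sym_right n) (adj_transp n)"
      "cox_len (sym_right n) (adj_transp n) (x \<otimes>\<^bsub>sym_right n\<^esub> t) = cox_len (sym_right n) (adj_transp n) x + 1"
      by blast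
    then have xt: "u = x" "v = t \<circ> x" "x permutes {1..n}"
      "t \<in> reflections (sym_right n) (adj_transp n)"
      "cox_len (sym_right n) (adj_transp n) (t \<circ> x) = cox_len (sym_right n) (adj_transp n) x + 1"
      by (simp_all add: sym_mult sym_carrier)
    obtain a b where ab: "1 \<le> a" "a < b" "b \<le> n" "t = tr a b" using refl_transp[OF xt(4)] by blast
    show ?thesis using bruhat_step[OF n al xt(3) ab(1,2,3)] xt ab(4) by simp
  qed
  show ?thesis using assms(4) unfolding bruhat_lt_def
  proof (induction rule: trancl_induct)
    case (base y) then show ?case using one by blast
  next
    case (step y z) then show ?case using one border_prec_trans by blast
  qed
qed

lemma wprod_Cons: "wprod G (s # ws) = s \<otimes>\<^bsub>G\<^esub> wprod G ws"
  by (simp add: wprod_def)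

lemma wprod_Nil: "wprod G [] = \<one>\<^bsub>G\<^esub>"
  by (simp add: wprod_def)

lemma wprod_closed: "monoid G \<Longrightarrow> set ws \<subseteq> carrier G \<Longrightarrow> wprod G ws \<in> carrier G"
  by (induction ws) (auto simp: wprod_Cons wprod_Nil monoid.m_closed monoid.one_closed)

lemma wprod_append:
  "monoid G \<Longrightarrow> set xs \<subseteq> carrier G \<Longrightarrow> set ys \<subseteq> carrier G \<Longrightarrow>
    wprod G (xs @ ys) = wprod G xs \<otimes>\<^bsub>G\<^esub> wprod G ys"
proof (induction xs)
  case Nil then show ?case by (simp add: wprod_Nil monoid.l_one wprod_closed)
next
  case (Cons x xs)
  then show ?case by (simp add: wprod_Cons monoid.m_assoc wprod_closed)
qed

lemma prefix_len:
  assumes G: "monoid W" and S: "S \<subseteq> carrier W" and ss: "set ss \<subseteq> S"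
    and red: "length ss = cox_len W S (wprod W ss)" and k: "k \<le> length ss"
  shows "cox_len W S (wprod W (take k ss)) = k"
proof -
  define u where "u = wprod W (take k ss)"
  have tk: "set (take k ss) \<subseteq> S" using ss by (meson order_trans set_take_subset)
  have ex: "\<exists>ws. set ws \<subseteq> S \<and> length ws = k \<and> wprod W ws = u"
    using tk k unfolding u_def by (intro exI[of _ "take k ss"]) simp
  have le: "cox_len W S u \<le> k" unfolding cox_len_def by (rule Least_le) (rule ex)
  obtain ws where ws: "set ws \<subseteq> S" "length ws = cox_len W S u" "wprod W ws = u"
    using LeastI_ex[of "\<lambda>j. \<exists>ws. set ws \<subseteq> S \<and> length ws = j \<and> wprod W ws = u"] ex
    unfolding cox_len_def by blast
  have "\<not> cox_len W S u < k"
  proof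
    assume lt: "cox_len W S u < k"
    have dr: "set (drop k ss) \<subseteq> S" using ss by (meson order_trans set_drop_subset)
    have "wprod W (ws @ drop k ss) = u \<otimes>\<^bsub>W\<^esub> wprod W (drop k ss)"
      using wprod_append[OF G, of ws "drop k ss"] ws S dr by auto
    also have "\<dots> = wprod W (take k ss @ drop k ss)"
      unfolding u_def using wprod_append[OF G, of "take k ss" "drop k ss"] tk dr S by auto
    finally have eq: "wprod W (ws @ drop k ss) = wprod W ss" by simp
    have ex2: "\<exists>v. set v \<subseteq> S \<and> length v = length (ws @ drop k ss) \<and> wprod W v = wprod W ss"
      using ws dr eq by (intro exI[of _ "ws @ drop k ss"]) auto
    have "cox_len W S (wprod W ss) \<le> length (ws @ drop k ss)"
      unfolding cox_len_def by (rule Least_le) (rule ex2)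
    also have "\<dots> < length ss" using ws lt k by simp
    finally show False using red by simp
  qed
  then show ?thesis using le unfolding u_def by simp
qed

theorem theorem1p1:
  fixes W :: "('a, 'b) monoid_scheme" and S :: "'a set"
    and \<phi> :: "'a \<Rightarrow> nat \<Rightarrow> nat" and n :: nat and \<alpha> :: real
  assumes "coxeter_system W S" and "finite (carrier W)"
    and "n \<ge> 2" and "E_embedding W S n \<phi>"
    and "pi / 4 \<le> \<alpha>" and "\<alpha> < pi / 2"
  shows "\<forall>w\<in>carrier W. \<forall>ss. set ss \<subseteq> S \<and> wprod W ss = w \<and> length ss = cox_len W S w \<longrightarrow>
           (\<forall>k < length ss. border_prec \<alpha> n (\<phi> (wprod W (take k ss)))
                                              (\<phi> (wprod W (take (Suc k) ss))))"
proof (intro ballI allI impI)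
  fix w ss k
  assume w: "w \<in> carrier W" and h: "set ss \<subseteq> S \<and> wprod W ss = w \<and> length ss = cox_len W S w"
    and k: "k < length ss"
  have grp: "group W" and S: "S \<subseteq> carrier W" using assms(1) unfolding coxeter_system_def by auto
  have G: "monoid W" using grp by (simp add: group.is_monoid)
  have red: "length ss = cox_len W S (wprod W ss)" using h by simp
  define u where "u = wprod W (take k ss)"
  define s where "s = ss ! k"
  have tk: "set (take k ss) \<subseteq> S" using h by (meson order_trans set_take_subset)
  have sS: "s \<in> S" using h k unfolding s_def by (meson nth_mem subsetD)
  have uc: "u \<in> carrier W" unfolding u_def using wprod_closed[OF G] tk S by blast
  have take: "take (Suc k) ss = take k ss @ [s]" unfolding s_def using k by (simp add: take_Suc_conv_app_nth)
  have us: "wprod W (take (Suc k) ss) = u \<otimes>\<^bsub>W\<^esub> s"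
    unfolding take u_def using wprod_append[OF G, of "take k ss" "[s]"] tk sS S
    by (auto simp: wprod_Cons wprod_Nil monoid.r_one[OF G])
  have lu: "cox_len W S u = k" unfolding u_def using prefix_len[OF G S _ red] h k by auto
  have lus: "cox_len W S (u \<otimes>\<^bsub>W\<^esub> s) = k + 1"
    using prefix_len[OF G S _ red, of "Suc k"] h k us by auto
  have wl: "weak_lt W S u (u \<otimes>\<^bsub>W\<^esub> s)"
    unfolding weak_lt_def using uc sS lu lus by (intro r_into_trancl) auto
  have usc: "u \<otimes>\<^bsub>W\<^esub> s \<in> carrier W" using uc sS S by (meson G monoid.m_closed subsetD)
  have "bruhat_lt (sym_right n) (adj_transp n) (\<phi> u) (\<phi> (u \<otimes>\<^bsub>W\<^esub> s))"
    using assms(4) uc usc wl unfolding E_embedding_def by blast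
  then have "border_prec \<alpha> n (\<phi> u) (\<phi> (u \<otimes>\<^bsub>W\<^esub> s))"
    using bruhat_prec assms(3,5,6) by blast
  then show "border_prec \<alpha> n (\<phi> (wprod W (take k ss))) (\<phi> (wprod W (take (Suc k) ss)))"
    using us unfolding u_def by simp
qed

end
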